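(* Let $Q,Q'\ge 1$ be real numbers, let $n\ge 1$ be an integer, and let $A,B\subseteq\mathcal F_{Q,Q'}$. Let $T=\max_{1\le m\le QQ'}\tau(m)$, where $\tau(m)$ is the number of positive divisors of $m$. Then $$|A/B|\ge \frac{|A||B|}{(4T)^{n+1}(QQ')^{1/n}\bigl(1+\log(QQ')\bigr)}.$$
   Context: For real numbers $Q,Q'\ge 1$, $\mathcal F_{Q,Q'}=\{q/q' : q,q'\in\mathbb{Z},\ 1\le q\le Q,\ 1\le q'\le Q'\}$. For sets $A,B$ of positive rationals, $A/B=\{a/b: a\in A,\ b\in B\}$. $\log$ denotes the natural logarithm. *)

theory Defs
  imports Complex_Main
begin

definition farey_quot :: "real \<Rightarrow> real \<Rightarrow> rat set" where
  "farey_quot Q Q' = {of_int q / of_int q' | q q' :: int.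
      1 \<le> q \<and> real_of_int q \<le> Q \<and> 1 \<le> q' \<and> real_of_int q' \<le> Q'}"

definition set_quot :: "rat set \<Rightarrow> rat set \<Rightarrow> rat set" where
  "set_quot A B = {a / b | a b. a \<in> A \<and> b \<in> B}"

definition num_divisors :: "nat \<Rightarrow> nat" where
  "num_divisors m = card {d. d dvd m}"

definition max_tau :: "real \<Rightarrow> nat" where
  "max_tau X = Max {num_divisors m | m :: nat. 1 \<le> m \<and> real m \<le> X}"

end

theory Submission
  imports Defs "HOL-Analysis.Convex"
begin


definition nu :: "rat \<Rightarrow> int" where "nu a = fst (quotient_of a)"
definition de :: "rat \<Rightarrow> int" where "de a = snd (quotient_of a)"

lemma nd_basic: "a = of_int (nu a) / of_int (de a)" "de a > 0" "coprime (nu a) (de a)"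
  unfolding nu_def de_def
  using quotient_of_div[of a "fst (quotient_of a)" "snd (quotient_of a)"]
    quotient_of_denom_pos' quotient_of_coprime[of a "fst (quotient_of a)" "snd (quotient_of a)"]
  by auto

lemma rat_eqI: "nu a = nu b \<Longrightarrow> de a = de b \<Longrightarrow> a = b"
  unfolding nu_def de_def by (metis prod_eq_iff quotient_of_inject)

lemma nd_of: assumes "q > 0" "coprime p q"
  shows "nu (of_int p / of_int q) = p" "de (of_int p / of_int q) = q"
proof -
  have "quotient_of (of_int p / of_int q) = (p,q)"
    using assms by (simp flip: Fract_of_int_quotient add: quotient_of_Fract)
  then show "nu (of_int p / of_int q) = p" "de (of_int p / of_int q) = q"
    by (auto simp: nu_def de_def)
qed

lemma farey_nd:
  assumes "a \<in> farey_quot Q Q'"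
  shows "1 \<le> nu a" "real_of_int (nu a) \<le> Q" "real_of_int (de a) \<le> Q'"
proof -
  obtain q q' :: int where a: "a = of_int q / of_int q'" and h: "1 \<le> q" "real_of_int q \<le> Q"
    "1 \<le> q'" "real_of_int q' \<le> Q'"
    using assms unfolding farey_quot_def by auto
  have d: "de a > 0" and c: "coprime (nu a) (de a)" using nd_basic by auto
  have "of_int (nu a) / of_int (de a) = (of_int q / of_int q' :: rat)" using a nd_basic(1) by metis
  hence e: "nu a * q' = q * de a" using d h
    by (simp add: field_simps) (metis of_int_eq_iff of_int_mult)
  hence "de a dvd nu a * q'" by simp
  hence "de a dvd q'" using c by (metis coprime_commute coprime_dvd_mult_left_iff coprime_dvd_mult_right_iff)
  hence dq: "de a \<le> q'" using h by (simp add: zdvd_imp_le)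
  have "nu a * q' \<le> q * q'" using e dq h by (simp add: mult_left_mono)
  hence "nu a \<le> q" using h by simp
  moreover have "nu a > 0" using e d h by (metis mult_pos_pos pos_imp_zdiv_pos_iff zero_less_mult_pos2 zero_less_one_class.zero_le_one less_le_trans zero_less_one)
  ultimately show "1 \<le> nu a" "real_of_int (nu a) \<le> Q" "real_of_int (de a) \<le> Q'"
    using h dq by (auto simp del: of_int_le_iff intro: order_trans[of _ "real_of_int q"] order_trans[of _ "real_of_int q'"])
qed

definition Dv :: "int \<Rightarrow> int set" where "Dv m = {x. 0 < x \<and> x dvd m}"
definition tau :: "int \<Rightarrow> nat" where "tau m = card (Dv m)"

lemma Dv_eq: "m \<ge> 1 \<Longrightarrow> Dv m = int ` {d. d dvd nat m}"
proof (rule set_eqI, rule iffI)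
  fix x assume m: "m \<ge> 1" and "x \<in> Dv m"
  hence x: "0 < x" "x dvd m" by (auto simp: Dv_def)
  hence "nat x dvd nat m" using m by (simp add: nat_dvd_iff)
  then show "x \<in> int ` {d. d dvd nat m}" using x by (auto intro!: image_eqI[of _ _ "nat x"])
next
  fix x assume m: "m \<ge> 1" and "x \<in> int ` {d. d dvd nat m}"
  then obtain d where d: "d dvd nat m" "x = int d" by auto
  hence "d > 0" using m by (metis dvd_0_left_iff gr0I nat_0_iff not_one_le_zero zero_le_imp_eq_int order.trans zero_le_one linorder_not_le nat_le_0)
  moreover have "int d dvd m" proof - have "int d dvd int (nat m)" using d(1) by (simp only: int_dvd_int_iff) moreover have "int (nat m) = m" using m by simp ultimately show ?thesis by simp qed
  ultimately show "x \<in> Dv m" using d by (auto simp: Dv_def)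
qed

lemma finite_Dv: "m \<ge> 1 \<Longrightarrow> finite (Dv m)"
  by (simp add: Dv_eq)

lemma tau_eq: "m \<ge> 1 \<Longrightarrow> tau m = num_divisors (nat m)"
  unfolding tau_def num_divisors_def by (simp add: Dv_eq card_image)

lemma tau_le: assumes "1 \<le> m" "real_of_int m \<le> X" shows "tau m \<le> max_tau X"
proof -
  have fin: "finite {num_divisors m | m :: nat. 1 \<le> m \<and> real m \<le> X}"
  proof (rule finite_subset)
    show "{num_divisors m | m :: nat. 1 \<le> m \<and> real m \<le> X} \<subseteq> num_divisors ` {..nat \<lfloor>X\<rfloor>}"
      by (auto simp: le_nat_floor)
  qed auto
  have "num_divisors (nat m) \<in> {num_divisors m | m :: nat. 1 \<le> m \<and> real m \<le> X}"
    using assms by (auto intro!: exI[of _ "nat m"])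
  then show ?thesis unfolding max_tau_def tau_eq[OF assms(1)] using fin by (rule Max_ge[rotated])
qed

lemma max_tau_ge1: assumes "X \<ge> 1" shows "max_tau X \<ge> 1"
proof -
  have "tau 1 = 1" by (simp add: tau_eq num_divisors_def)
  then show ?thesis using tau_le[of 1 X] assms by simp
qed

definition phi :: "rat \<times> rat \<Rightarrow> (int \<times> int) \<times> (int \<times> int)" where
  "phi z = (case z of (a,b) \<Rightarrow>
     ((nu a div gcd (nu a) (nu b), de a div gcd (de a) (de b)),
      (nu b div gcd (nu a) (nu b), de b div gcd (de a) (de b))))"

lemma quot_nd:
  assumes pa: "nu a > 0" and pb: "nu b > 0"
  defines "x1 \<equiv> nu a div gcd (nu a) (nu b)" and "x2 \<equiv> nu b div gcd (nu a) (nu b)"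
    and "y1 \<equiv> de a div gcd (de a) (de b)" and "y2 \<equiv> de b div gcd (de a) (de b)"
  shows "nu (a/b) = x1 * y2" "de (a/b) = y1 * x2"
    "0 < x1" "0 < x2" "0 < y1" "0 < y2" "x1 \<le> nu a" "x2 \<le> nu b" "y1 \<le> de a" "y2 \<le> de b"
proof -
  define g where "g = gcd (nu a) (nu b)"
  define h where "h = gcd (de a) (de b)"
  have da: "de a > 0" and db: "de b > 0" using nd_basic by auto
  have g: "g > 0" "h > 0" using pa da unfolding g_def h_def by auto
  have ea: "nu a = x1 * g" "nu b = x2 * g" "de a = y1 * h" "de b = y2 * h"
    unfolding x1_def x2_def y1_def y2_def g_def h_def by simp_all
  show pos: "0 < x1" "0 < x2" "0 < y1" "0 < y2"
    using ea pa pb da db g by (auto simp: zero_less_mult_iff)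
  show "x1 \<le> nu a" "x2 \<le> nu b" "y1 \<le> de a" "y2 \<le> de b"
    using ea pos g by auto
  have c12: "coprime x1 x2" unfolding x1_def x2_def using pa by (intro div_gcd_coprime) auto
  have cy12: "coprime y1 y2" unfolding y1_def y2_def using da by (intro div_gcd_coprime) auto
  have cxy1: "coprime x1 y1"
    using nd_basic(3)[of a] ea by (metis coprime_mult_left_iff coprime_mult_right_iff)
  have cxy2: "coprime x2 y2"
    using nd_basic(3)[of b] ea by (metis coprime_mult_left_iff coprime_mult_right_iff)
  have cop: "coprime (x1 * y2) (y1 * x2)"
    using c12 cy12 cxy1 cxy2
    by (simp add: coprime_mult_left_iff coprime_mult_right_iff coprime_commute)
  have "a / b = (of_int (nu a) / of_int (de a)) / (of_int (nu b) / of_int (de b))"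
    using nd_basic(1)[of a] nd_basic(1)[of b] by simp
  also have "\<dots> = of_int (x1 * y2) / of_int (y1 * x2)"
    using ea g pos by (simp add: field_simps)
  finally have ab: "a / b = of_int (x1 * y2) / of_int (y1 * x2)" .
  have "y1 * x2 > 0" using pos by simp
  note yx = this
  show "nu (a/b) = x1 * y2" unfolding ab by (rule nd_of(1)[OF yx cop])
  show "de (a/b) = y1 * x2" unfolding ab by (rule nd_of(2)[OF yx cop])
qed

lemma div_gcd_inj:
  fixes n m m' :: int
  assumes "n \<noteq> 0" "n div gcd n m = n div gcd n m'" "m div gcd n m = m' div gcd n m'"
  shows "m = m'"
proof -
  define g where "g = gcd n m"
  define g' where "g' = gcd n m'"
  have "n = (n div g) * g" "n = (n div g') * g'" unfolding g_def g'_def by simp_all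
  hence "(n div g) * g = (n div g) * g'" using assms(2) unfolding g_def g'_def by simp
  moreover have "n div g \<noteq> 0" using \<open>n = (n div g) * g\<close> assms(1) by auto
  ultimately have "g = g'" by simp
  have "m = (m div g) * g" "m' = (m' div g') * g'" unfolding g_def g'_def by simp_all
  then show ?thesis using assms(3) \<open>g = g'\<close> unfolding g_def g'_def by simp
qed

lemma phi_inj2:
  assumes "nu a > 0" "phi (a,b) = phi (a,b')" shows "b = b'"
proof (rule rat_eqI)
  have "de a \<noteq> 0" using nd_basic(2)[of a] by simp
  have e: "nu a div gcd (nu a) (nu b) = nu a div gcd (nu a) (nu b')"
    "de a div gcd (de a) (de b) = de a div gcd (de a) (de b')"
    "nu b div gcd (nu a) (nu b) = nu b' div gcd (nu a) (nu b')"
    "de b div gcd (de a) (de b) = de b' div gcd (de a) (de b')"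
    using assms(2) unfolding phi_def by simp_all
  show "nu b = nu b'" using div_gcd_inj[of "nu a" "nu b" "nu b'"] assms(1) e(1,3) by simp
  show "de b = de b'" using div_gcd_inj[of "de a" "de b" "de b'"] \<open>de a \<noteq> 0\<close> e(2,4) by simp
qed

lemma phi_inj1:
  assumes "nu b > 0" "phi (a,b) = phi (a',b)" shows "a = a'"
proof (rule rat_eqI)
  have "de b \<noteq> 0" using nd_basic(2)[of b] by simp
  have e: "nu b div gcd (nu a) (nu b) = nu b div gcd (nu a') (nu b)"
    "de b div gcd (de a) (de b) = de b div gcd (de a') (de b)"
    "nu a div gcd (nu a) (nu b) = nu a' div gcd (nu a') (nu b)"
    "de a div gcd (de a) (de b) = de a' div gcd (de a') (de b)"
    using assms(2) unfolding phi_def by simp_all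
  have g: "gcd (nu a) (nu b) = gcd (nu b) (nu a)" "gcd (nu a') (nu b) = gcd (nu b) (nu a')"
    "gcd (de a) (de b) = gcd (de b) (de a)" "gcd (de a') (de b) = gcd (de b) (de a')"
    by (rule gcd.commute)+
  show "nu a = nu a'" using div_gcd_inj[of "nu b" "nu a" "nu a'"] assms(1) e(1,3) unfolding g by simp
  show "de a = de a'" using div_gcd_inj[of "de b" "de a" "de a'"] \<open>de b \<noteq> 0\<close> e(2,4) unfolding g by simp
qed

lemma card_filter_sum: "finite A \<Longrightarrow> card {a\<in>A. P a} = (\<Sum>a\<in>A. if P a then 1 else 0)"
proof -
  assume "finite A"
  have "card {a\<in>A. P a} = sum (\<lambda>_. 1) {a\<in>A. P a}" by (rule card_eq_sum)
  also have "\<dots> = (\<Sum>a\<in>A. if P a then 1 else 0)" using \<open>finite A\<close> by (rule sum.inter_filter)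
  finally show ?thesis .
qed

lemma card_sum_swap:
  assumes "finite A" "finite P"
  shows "(\<Sum>p\<in>P. card {a\<in>A. R p a}) = (\<Sum>a\<in>A. card {p\<in>P. R p a})"
proof -
  have "(\<Sum>p\<in>P. card {a\<in>A. R p a}) = (\<Sum>p\<in>P. \<Sum>a\<in>A. if R p a then 1 else 0)"
    using assms by (simp add: card_filter_sum)
  also have "\<dots> = (\<Sum>a\<in>A. \<Sum>p\<in>P. if R p a then 1 else 0)" by (rule sum.swap)
  also have "\<dots> = (\<Sum>a\<in>A. card {p\<in>P. R p a})"
    using assms by (simp add: card_filter_sum)
  finally show ?thesis .
qed

lemma CS_nat:
  fixes c :: "'a \<Rightarrow> nat"
  assumes "finite S"
  shows "(\<Sum>s\<in>S. c s)^2 \<le> card S * (\<Sum>s\<in>S. (c s)^2)"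
proof -
  have "(\<Sum>s\<in>S. real (c s))\<^sup>2 \<le> (\<Sum>s\<in>S. (real (c s))\<^sup>2) * card S"
    by (rule sum_squared_le_sum_of_squares)
  hence "real ((\<Sum>s\<in>S. c s)^2) \<le> real ((\<Sum>s\<in>S. (c s)^2) * card S)" by simp
  then show ?thesis by (simp only: of_nat_le_iff mult.commute)
qed


lemma div_gcd_dvd1: "(n::int) div gcd n m dvd n"
  by (metis dvd_div_mult_self gcd_dvd1 dvd_triv_left)
lemma div_gcd_dvd2: "(m::int) div gcd n m dvd m"
  by (metis dvd_div_mult_self gcd_dvd2 dvd_triv_left)

lemma main_count:
  fixes A B :: "rat set" and Q Q' :: real
  assumes Q: "Q \<ge> 1" "Q' \<ge> 1" and AB: "A \<subseteq> farey_quot Q Q'" "B \<subseteq> farey_quot Q Q'"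
    and fin: "finite A" "finite B"
  shows "card A * card B \<le> (max_tau (Q*Q'))^6 * card (set_quot A B)"
proof -
  define X where "X = Q * Q'"
  define T where "T = max_tau X"
  define M where "M = \<lfloor>X\<rfloor>"
  define P where "P = {1..M} \<times> {1..M}"
  define S where "S = phi ` (A \<times> B)"
  define R where "R = set_quot A B"
  define \<alpha> where "\<alpha> p = card {a\<in>A. fst p dvd nu a \<and> snd p dvd de a}" for p
  define \<beta> where "\<beta> p = card {b\<in>B. fst p dvd nu b \<and> snd p dvd de b}" for p
  define c where "c s = card {z\<in>A\<times>B. phi z = s}" for s
  have X1: "X \<ge> 1" using Q unfolding X_def by (metis mult_mono' mult_1_left zero_le_one order.trans)
  have QX: "Q \<le> X" "Q' \<le> X" using Q unfolding X_def by (auto intro: mult_right_mono[of 1 Q' Q, simplified] mult_left_mono[of 1 Q Q', simplified])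
  have bnd: "1 \<le> nu a" "real_of_int (nu a) \<le> Q" "real_of_int (de a) \<le> Q'" "1 \<le> de a"
    if "a \<in> A \<union> B" for a
    using farey_nd[of a Q Q'] that AB nd_basic(2)[of a] by auto
  have bndX: "real_of_int (nu a) \<le> X" "real_of_int (de a) \<le> X" "nu a \<le> M" "de a \<le> M"
    if "a \<in> A \<union> B" for a
    using bnd[OF that] QX unfolding M_def by (auto simp: le_floor_iff)
  have Rimg: "R = (\<lambda>z. fst z / snd z) ` (A \<times> B)" unfolding R_def set_quot_def by force
  have finR: "finite R" unfolding Rimg using fin by simp
  have finS: "finite S" unfolding S_def using fin by simp
  have finP: "finite P" unfolding P_def by simp
  define \<Psi> where "\<Psi> w = (case w of (r, (x,y)) \<Rightarrow> ((x,y), (de r div y, nu r div x)))" for w :: "rat \<times> int \<times> int"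
  have rbnd: "1 \<le> nu r \<and> real_of_int (nu r) \<le> X \<and> 1 \<le> de r \<and> real_of_int (de r) \<le> X" if "r \<in> R" for r
  proof -
    have "r \<in> (\<lambda>z. fst z / snd z) ` (A \<times> B)" using that Rimg by simp
    then obtain z where z: "z \<in> A \<times> B" "r = fst z / snd z" by blast
    define a where "a = fst z"
    define b where "b = snd z"
    have ab: "a \<in> A" "b \<in> B" "r = a / b" using z unfolding a_def b_def by auto
    have pa: "nu a > 0" "nu b > 0" using bnd ab by force+
    note qn = quot_nd[OF pa]
    have "real_of_int (nu r) \<le> real_of_int (nu a) * real_of_int (de b)"
      using qn ab by (simp del: of_int_mult add: of_int_mult[symmetric] mult_mono)
    also have "\<dots> \<le> Q * Q'" using bnd[of a] bnd[of b] ab Q by (intro mult_mono) auto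
    finally have 1: "real_of_int (nu r) \<le> X" unfolding X_def .
    have "real_of_int (de r) \<le> real_of_int (de a) * real_of_int (nu b)"
      using qn ab by (simp del: of_int_mult add: of_int_mult[symmetric] mult_mono)
    also have "\<dots> \<le> Q' * Q" using bnd[of a] bnd[of b] ab Q by (intro mult_mono) auto
    finally have 2: "real_of_int (de r) \<le> X" unfolding X_def by (simp add: mult.commute)
    have "0 < nu r" unfolding ab(3) qn(1) using qn(3,6) by (rule mult_pos_pos)
    moreover have "0 < de r" using nd_basic(2) by blast
    ultimately have "1 \<le> nu r" "1 \<le> de r" by linarith+
    with 1 2 show ?thesis by auto
  qed
  have SsubPsi: "S \<subseteq> \<Psi> ` (SIGMA r:R. Dv (nu r) \<times> Dv (de r))"
  proof
    fix s assume "s \<in> S"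
    then obtain a b where ab: "a \<in> A" "b \<in> B" "s = phi (a,b)" unfolding S_def by auto
    have pa: "nu a > 0" "nu b > 0" using bnd ab by force+
    note qn = quot_nd[OF pa]
    have r: "a / b \<in> R" using ab unfolding R_def set_quot_def by auto
    define x where "x = nu a div gcd (nu a) (nu b)"
    define y where "y = de a div gcd (de a) (de b)"
    have "x \<in> Dv (nu (a/b))" "y \<in> Dv (de (a/b))" using qn unfolding Dv_def x_def y_def by auto
    moreover have "s = \<Psi> (a/b, (x,y))" using qn ab unfolding \<Psi>_def phi_def x_def y_def by auto
    ultimately show "s \<in> \<Psi> ` (SIGMA r:R. Dv (nu r) \<times> Dv (de r))" using r by blast
  qed
  have finSig: "finite (SIGMA r:R. Dv (nu r) \<times> Dv (de r))"
    using finR rbnd finite_Dv by (intro finite_SigmaI) auto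
  have cardS: "card S \<le> T^2 * card R"
  proof -
    have "card S \<le> card (SIGMA r:R. Dv (nu r) \<times> Dv (de r))"
      using SsubPsi finSig by (meson card_image_le card_mono finite_imageI order_trans)
    also have "\<dots> = (\<Sum>r\<in>R. tau (nu r) * tau (de r))"
      using finR rbnd finite_Dv by (simp add: card_SigmaI tau_def card_cartesian_product)
    also have "\<dots> \<le> (\<Sum>r\<in>R. T * T)"
      using rbnd tau_le unfolding T_def by (intro sum_mono mult_mono) auto
    finally show ?thesis by (simp add: power2_eq_square mult.commute)
  qed
  have c\<alpha>: "c s \<le> \<alpha> (fst s)" and c\<beta>: "c s \<le> \<beta> (snd s)" for s
  proof -
    have "inj_on fst {z\<in>A\<times>B. phi z = s}"
    proof (rule inj_onI)
      fix z z' assume z: "z \<in> {z\<in>A\<times>B. phi z = s}" "z' \<in> {z\<in>A\<times>B. phi z = s}" "fst z = fst z'"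
      obtain a b a' b' where zz: "z = (a,b)" "z' = (a',b')" by fastforce
      have "nu a > 0" using z zz bnd by force
      then have "b = b'" using phi_inj2[of a b b'] z zz by auto
      then show "z = z'" using z zz by auto
    qed
    moreover have "fst ` {z\<in>A\<times>B. phi z = s} \<subseteq> {a\<in>A. fst (fst s) dvd nu a \<and> snd (fst s) dvd de a}"
      by (auto simp: phi_def div_gcd_dvd1 div_gcd_dvd2)
    ultimately show "c s \<le> \<alpha> (fst s)" unfolding c_def \<alpha>_def
      by (rule card_inj_on_le) (use fin in simp)
    have "inj_on snd {z\<in>A\<times>B. phi z = s}"
    proof (rule inj_onI)
      fix z z' assume z: "z \<in> {z\<in>A\<times>B. phi z = s}" "z' \<in> {z\<in>A\<times>B. phi z = s}" "snd z = snd z'"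
      obtain a b a' b' where zz: "z = (a,b)" "z' = (a',b')" by fastforce
      have "nu b > 0" using z zz bnd by force
      then have "a = a'" using phi_inj1[of b a a'] z zz by auto
      then show "z = z'" using z zz by auto
    qed
    moreover have "snd ` {z\<in>A\<times>B. phi z = s} \<subseteq> {b\<in>B. fst (snd s) dvd nu b \<and> snd (snd s) dvd de b}"
      by (auto simp: phi_def div_gcd_dvd1 div_gcd_dvd2)
    ultimately show "c s \<le> \<beta> (snd s)" unfolding c_def \<beta>_def
      by (rule card_inj_on_le) (use fin in simp)
  qed
  have divsum: "(\<Sum>p\<in>P. card {a\<in>C. fst p dvd nu a \<and> snd p dvd de a}) \<le> T^2 * card C"
    if C: "C \<subseteq> A \<union> B" "finite C" for C
  proof -
    have "(\<Sum>p\<in>P. card {a\<in>C. fst p dvd nu a \<and> snd p dvd de a})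
        = (\<Sum>a\<in>C. card {p\<in>P. fst p dvd nu a \<and> snd p dvd de a})"
      using card_sum_swap[OF C(2) finP, of "\<lambda>p a. fst p dvd nu a \<and> snd p dvd de a"] by simp
    also have "\<dots> = (\<Sum>a\<in>C. tau (nu a) * tau (de a))"
    proof (rule sum.cong[OF refl])
      fix a assume "a \<in> C"
      hence aa: "a \<in> A \<union> B" using C by auto
      have "{p\<in>P. fst p dvd nu a \<and> snd p dvd de a} = Dv (nu a) \<times> Dv (de a)"
        using bnd[OF aa] bndX[OF aa] unfolding P_def Dv_def
        by (auto dest: zdvd_imp_le intro: order_trans)
      then show "card {p\<in>P. fst p dvd nu a \<and> snd p dvd de a} = tau (nu a) * tau (de a)"
        by (simp add: tau_def card_cartesian_product)
    qed
    also have "\<dots> \<le> (\<Sum>a\<in>C. T * T)"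
      using C bnd bndX tau_le unfolding T_def by (intro sum_mono mult_mono) auto
    finally show ?thesis by (simp add: power2_eq_square mult.commute)
  qed
  have SP: "S \<subseteq> P \<times> P"
  proof
    fix s assume "s \<in> S"
    then obtain a b where ab: "a \<in> A" "b \<in> B" "s = phi (a,b)" unfolding S_def by auto
    have pa: "nu a > 0" "nu b > 0" using bnd ab by force+
    note qn = quot_nd[OF pa]
    show "s \<in> P \<times> P" using qn ab bndX[of a] bndX[of b] unfolding P_def phi_def by auto
  qed
  have sumc: "card A * card B = (\<Sum>s\<in>S. c s)"
  proof -
    have "(\<Sum>s\<in>S. sum (\<lambda>_. 1::nat) {z. z \<in> A \<times> B \<and> phi z = s}) = sum (\<lambda>_. 1) (A \<times> B)"
      using fin finS unfolding S_def by (intro sum.group) auto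
    then show ?thesis unfolding c_def by (simp add: card_cartesian_product)
  qed
  have "(card A * card B)^2 \<le> card S * (\<Sum>s\<in>S. (c s)^2)"
    unfolding sumc using finS by (rule CS_nat)
  also have "(\<Sum>s\<in>S. (c s)^2) \<le> (\<Sum>s\<in>S. \<alpha> (fst s) * \<beta> (snd s))"
    using c\<alpha> c\<beta> by (intro sum_mono) (simp add: power2_eq_square mult_mono)
  also have "\<dots> \<le> (\<Sum>s\<in>P\<times>P. \<alpha> (fst s) * \<beta> (snd s))"
    using SP finP by (intro sum_mono2) auto
  also have "\<dots> = (\<Sum>p\<in>P. \<alpha> p) * (\<Sum>q\<in>P. \<beta> q)"
    by (simp add: sum_product sum.cartesian_product split_beta)
  also have "\<dots> \<le> (T^2 * card A) * (T^2 * card B)"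
    unfolding \<alpha>_def \<beta>_def using divsum fin by (intro mult_mono) auto
  finally have "(card A * card B)^2 \<le> card S * ((T^2 * card A) * (T^2 * card B))"
    by (simp add: mult_left_mono)
  also have "\<dots> \<le> (T^2 * card R) * ((T^2 * card A) * (T^2 * card B))"
    using cardS by (intro mult_right_mono) auto
  finally have ineq: "(card A * card B) * (card A * card B) \<le> (T^6 * card R) * (card A * card B)"
    by (simp add: power2_eq_square algebra_simps power_numeral_reduce)
  show ?thesis
  proof (cases "card A * card B = 0")
    case True then show ?thesis by (metis le0)
  next
    case False
    then show ?thesis using ineq unfolding T_def X_def R_def by simp
  qed
qed



lemma farey_img: "farey_quot Q Q' = (\<lambda>z. of_int (fst z) / of_int (snd z)) ` ({1..\<lfloor>Q\<rfloor>} \<times> {1..\<lfloor>Q'\<rfloor>})"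
  unfolding farey_quot_def by (force simp: le_floor_iff)

lemma farey_fin: "finite (farey_quot Q Q')"
  unfolding farey_img by simp

lemma farey_card: assumes "Q \<ge> 1" "Q' \<ge> 1" shows "real (card (farey_quot Q Q')) \<le> Q * Q'"
proof -
  have "card (farey_quot Q Q') \<le> card ({1..\<lfloor>Q\<rfloor>} \<times> {1..\<lfloor>Q'\<rfloor>})"
    unfolding farey_img by (rule card_image_le) simp
  also have "\<dots> = nat \<lfloor>Q\<rfloor> * nat \<lfloor>Q'\<rfloor>" by (simp add: card_cartesian_product)
  finally have "real (card (farey_quot Q Q')) \<le> real (nat \<lfloor>Q\<rfloor>) * real (nat \<lfloor>Q'\<rfloor>)"
    by (metis of_nat_le_iff of_nat_mult)
  also have "\<dots> \<le> Q * Q'"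
    using assms by (intro mult_mono) auto
  finally show ?thesis .
qed

lemma farey_pos: "a \<in> farey_quot Q Q' \<Longrightarrow> a > 0"
  unfolding farey_quot_def by auto

lemma card_le_quot:
  assumes "b \<in> B" "b \<noteq> 0" "finite A" "finite B"
  shows "card A \<le> card (set_quot A B)"
proof -
  have "card A = card ((\<lambda>a. a / b) ` A)"
    using assms by (intro card_image[symmetric]) (auto intro: inj_onI)
  also have "\<dots> \<le> card (set_quot A B)"
  proof (rule card_mono)
    have "set_quot A B = (\<lambda>z. fst z / snd z) ` (A \<times> B)" unfolding set_quot_def by force
    then show "finite (set_quot A B)" using assms by simp
    show "(\<lambda>a. a / b) ` A \<subseteq> set_quot A B" using assms unfolding set_quot_def by auto
  qed
  finally show ?thesis .
qed

lemma nat_ineq: "n \<ge> 1 \<Longrightarrow> 6 * (n::nat) \<le> n * n + n + 6"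
proof (cases "n \<le> 4")
  case True
  assume "n \<ge> 1"
  with True have "n = 1 \<or> n = 2 \<or> n = 3 \<or> n = 4" by auto
  then show ?thesis by auto
next
  case False
  then have "5 * n \<le> n * n" by (intro mult_right_mono) auto
  then show ?thesis by linarith
qed

lemma final_real:
  fixes t x K N :: real and n :: nat
  assumes t: "t \<ge> 1" and x: "x \<ge> 1" and n: "n \<ge> 1" and h1: "N \<le> t^6 * K" and h2: "N \<le> K * x"
    and K: "K \<ge> 0"
  shows "N / ((4*t)^(n+1) * x powr (1 / real n) * (1 + ln x)) \<le> K"
proof -
  define \<theta> where "\<theta> = 1 / real n"
  have th: "0 \<le> \<theta>" "\<theta> \<le> 1" using n unfolding \<theta>_def by auto
  define a where "a = t^6"
  have a: "a \<ge> 1" using t unfolding a_def by simp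
  have mn: "N \<le> K * (a powr (1 - \<theta>) * x powr \<theta>)"
  proof (cases "a \<le> x")
    case True
    have "a = a powr (1 - \<theta>) * a powr \<theta>" using a by (simp add: powr_add[symmetric])
    also have "\<dots> \<le> a powr (1 - \<theta>) * x powr \<theta>"
      using a True th by (intro mult_left_mono powr_mono2) auto
    finally have "K * a \<le> K * (a powr (1 - \<theta>) * x powr \<theta>)" using K by (rule mult_left_mono)
    moreover have "N \<le> K * a" using h1 unfolding a_def by (simp add: mult.commute)
    ultimately show ?thesis by linarith
  next
    case False
    have "x = x powr (1 - \<theta>) * x powr \<theta>" using x by (simp add: powr_add[symmetric])
    also have "\<dots> \<le> a powr (1 - \<theta>) * x powr \<theta>"
      using x False th by (intro mult_right_mono powr_mono2) auto
    finally have "K * x \<le> K * (a powr (1 - \<theta>) * x powr \<theta>)" using K by (rule mult_left_mono)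
    then show ?thesis using h2 by linarith
  qed
  have t6: "t ^ 6 = t powr 6" using t by (simp add: powr_numeral)
  have "a powr (1 - \<theta>) = t powr (6 * (1 - \<theta>))"
    unfolding a_def t6 by (simp add: powr_powr)
  also have "\<dots> \<le> t powr (real n + 1)"
  proof (rule powr_mono[OF _ t])
    have "6 * real n \<le> real n * real n + real n + 6" using nat_ineq[OF n] by (metis of_nat_le_iff of_nat_mult of_nat_add of_nat_numeral)
    then show "6 * (1 - \<theta>) \<le> real n + 1" using n unfolding \<theta>_def by (simp add: field_simps)
  qed
  also have "\<dots> = t ^ (n+1)" using t powr_realpow[of t "n+1"] by (simp add: add.commute)
  also have "\<dots> \<le> (4*t)^(n+1)" using t by (intro power_mono) auto
  finally have "a powr (1 - \<theta>) * x powr \<theta> \<le> (4*t)^(n+1) * x powr \<theta> * (1 + ln x)"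
  proof -
    assume h: "a powr (1 - \<theta>) \<le> (4*t)^(n+1)"
    have "a powr (1 - \<theta>) * x powr \<theta> \<le> (4*t)^(n+1) * x powr \<theta>" using h by (intro mult_right_mono) auto
    also have "\<dots> \<le> (4*t)^(n+1) * x powr \<theta> * (1 + ln x)" proof -
      have "0 \<le> (4 * t) ^ (n + 1) * x powr \<theta>" using t by simp
      moreover have "1 \<le> 1 + ln x" using x by simp
      ultimately show ?thesis using mult_left_mono[of 1 "1 + ln x" "(4 * t) ^ (n + 1) * x powr \<theta>"] by simp
    qed
    finally show ?thesis .
  qed
  then have "K * (a powr (1 - \<theta>) * x powr \<theta>) \<le> K * ((4*t)^(n+1) * x powr \<theta> * (1 + ln x))"
    using K by (rule mult_left_mono)
  then have "N \<le> K * ((4*t)^(n+1) * x powr \<theta> * (1 + ln x))" using mn by linarith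
  moreover have "(4*t)^(n+1) * x powr \<theta> * (1 + ln x) > 0"
  proof -
    have l: "0 \<le> ln x" using x by simp
    have "(4*t)^(n+1) > 0" "x powr \<theta> > 0" using t x by auto
    moreover have "1 + ln x > 0" using l by linarith
    ultimately show ?thesis by (intro mult_pos_pos)
  qed
  ultimately show ?thesis unfolding \<theta>_def by (simp add: pos_divide_le_eq)
qed


theorem lemma1:
  fixes Q Q' :: real and n :: nat and A B :: "rat set"
  assumes "Q \<ge> 1" and "Q' \<ge> 1" and "n \<ge> 1"
    and "A \<subseteq> farey_quot Q Q'" and "B \<subseteq> farey_quot Q Q'"
  shows "real (card (set_quot A B)) \<ge>
    real (card A) * real (card B) /
      ((4 * real (max_tau (Q * Q'))) ^ (n + 1) * (Q * Q') powr (1 / real n) * (1 + ln (Q * Q')))"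
proof -
  have finA: "finite A" using assms(4) farey_fin by (rule finite_subset)
  have finB: "finite B" using assms(5) farey_fin by (rule finite_subset)
  have X1: "Q * Q' \<ge> 1" using assms(1,2) by (metis mult_mono' mult_1_left zero_le_one order.trans)
  have mc: "card A * card B \<le> (max_tau (Q*Q'))^6 * card (set_quot A B)"
    using main_count[OF assms(1,2,4,5) finA finB] .
  hence h1: "real (card A) * real (card B) \<le> real (max_tau (Q*Q')) ^ 6 * real (card (set_quot A B))"
    by (metis of_nat_le_iff of_nat_mult of_nat_power)
  have h2: "real (card A) * real (card B) \<le> real (card (set_quot A B)) * (Q * Q')"
  proof (cases "B = {}")
    case True then show ?thesis using X1 by simp
  next
    case False
    then obtain b where b: "b \<in> B" by auto
    have "b \<noteq> 0" using farey_pos[of b Q Q'] b assms(5) by auto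
    then have cA: "real (card A) \<le> real (card (set_quot A B))"
      using card_le_quot[OF b _ finA finB] by simp
    have "card B \<le> card (farey_quot Q Q')" using assms(5) farey_fin by (rule card_mono[rotated])
    then have "real (card B) \<le> Q * Q'" using farey_card[OF assms(1,2)] by linarith
    then show ?thesis using cA by (intro mult_mono) auto
  qed
  have t1: "real (max_tau (Q*Q')) \<ge> 1" using max_tau_ge1[OF X1] by simp
  show ?thesis
    using final_real[OF t1 X1 assms(3) h1 h2] by simp
qed

end
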